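(* Let $d\ge1$, let $\Lambda\subset\mathbb{R}^{2d}$ be a lattice, let $r>0$, and let $\Omega\subset\mathbb{R}^{2d}$ be a compact set with maximally Ahlfors regular boundary with constant $\kappa_{\partial\Omega}$. Then there exist constants $C,D$ (depending on $r$ and $\Lambda$) such that $$\#\partial^r_\Lambda\Omega\le C\,\frac{|\partial\Omega|}{\kappa_{\partial\Omega}}\Big(1+\frac{D}{|\partial\Omega|}\Big).$$
   Context: A lattice is $\Lambda=M\mathbb{Z}^{2d}$ with $M$ an invertible real $2d\times2d$ matrix. Write $n=2d$ for the ambient dimension, $\mathcal{H}^{n-1}$ for $(n-1)$-dimensional Hausdorff measure and $|\partial\Omega|=\mathcal{H}^{n-1}(\partial\Omega)$. The set $\Omega$ has maximally Ahlfors regular boundary with constant $\kappa_{\partial\Omega}>0$ if $\mathcal{H}^{n-1}(\partial\Omega\cap B(z,\varrho))\ge\kappa_{\partial\Omega}\varrho^{\,n-1}$ for every $z\in\partial\Omega$ and every $0<\varrho<|\partial\Omega|^{1/(n-1)}$. $B(z,\varrho)$ is the open ball; for $r>0$, $\partial^r_\Lambda\Omega=\Lambda\cap(\partial\Omega+B(0,r))$, and $\#$ denotes cardinality. *)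

theory Defs
  imports "HOL-Analysis.Analysis"
begin

definition hausdorff_premeasure :: "real \<Rightarrow> real \<Rightarrow> 'a::metric_space set \<Rightarrow> ennreal" where
  "hausdorff_premeasure s \<delta> E =
     (INF U \<in> {U :: nat \<Rightarrow> 'a set. E \<subseteq> (\<Union>i. U i) \<and> (\<forall>i. bounded (U i) \<and> diameter (U i) \<le> \<delta>)}.
        (\<Sum>i. ennreal (unit_ball_vol s * (diameter (U i) / 2) powr s)))"

definition hausdorff_measure :: "real \<Rightarrow> 'a::metric_space set \<Rightarrow> ennreal" where
  "hausdorff_measure s E = (SUP \<delta> \<in> {0<..}. hausdorff_premeasure s \<delta> E)"

definition bdry_measure :: "(real ^ 'n) set \<Rightarrow> ennreal" where
  "bdry_measure \<Omega> = hausdorff_measure (real CARD('n) - 1) (frontier \<Omega>)"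

text \<open>Maximally Ahlfors regular boundary with constant kappa > 0.  The range condition
  rho < |dOmega|^(1/(n-1)) is written as rho^(n-1) < |dOmega| (equivalent for rho > 0,
  and meaningful also when |dOmega| is infinite).\<close>
definition max_ahlfors_regular_boundary :: "(real ^ 'n) set \<Rightarrow> real \<Rightarrow> bool" where
  "max_ahlfors_regular_boundary \<Omega> \<kappa> \<longleftrightarrow> \<kappa> > 0 \<and>
     (\<forall>z \<in> frontier \<Omega>. \<forall>\<rho>. 0 < \<rho> \<and> ennreal (\<rho> ^ (CARD('n) - 1)) < bdry_measure \<Omega> \<longrightarrow>
        hausdorff_measure (real CARD('n) - 1) (frontier \<Omega> \<inter> ball z \<rho>) \<ge> ennreal (\<kappa> * \<rho> ^ (CARD('n) - 1)))"

definition lattice :: "real ^ 'n ^ 'n \<Rightarrow> (real ^ 'n) set" where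
  "lattice M = (\<lambda>k. M *v k) ` {k. \<forall>i. k $ i \<in> \<int>}"

definition bdry_lattice_points :: "real ^ 'n ^ 'n \<Rightarrow> real \<Rightarrow> (real ^ 'n) set \<Rightarrow> (real ^ 'n) set" where
  "bdry_lattice_points M r \<Omega> = lattice M \<inter> (frontier \<Omega> + ball 0 r)"

end

theory Submission
  imports Defs "HOL-Library.FuncSet"
begin


lemma hpre_mono_set: "A \<subseteq> B \<Longrightarrow> hausdorff_premeasure s \<delta> A \<le> hausdorff_premeasure s \<delta> B"
  unfolding hausdorff_premeasure_def by (rule INF_superset_mono) auto

lemma h_mono_set: "A \<subseteq> B \<Longrightarrow> hausdorff_measure s A \<le> hausdorff_measure s B"
  unfolding hausdorff_measure_def by (rule SUP_mono) (use hpre_mono_set in blast)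

lemma hpre_anti: "\<delta>1 \<le> \<delta>2 \<Longrightarrow> hausdorff_premeasure s \<delta>2 A \<le> hausdorff_premeasure s \<delta>1 A"
  unfolding hausdorff_premeasure_def by (rule INF_superset_mono) (auto intro: order_trans)

lemma hpre_split:
  fixes A B :: "'a::metric_space set"
  assumes sep: "\<And>x y. x \<in> A \<Longrightarrow> y \<in> B \<Longrightarrow> dist x y \<ge> 1" and d: "\<delta> < 1" and d0: "0 \<le> \<delta>"
  shows "hausdorff_premeasure s \<delta> A + hausdorff_premeasure s \<delta> B \<le> hausdorff_premeasure s \<delta> (A \<union> B)"
  unfolding hausdorff_premeasure_def[of s \<delta> "A \<union> B"]
proof (rule INF_greatest)
  fix U :: "nat \<Rightarrow> 'a set"
  assume U: "U \<in> {U. A \<union> B \<subseteq> (\<Union>i. U i) \<and> (\<forall>i. bounded (U i) \<and> diameter (U i) \<le> \<delta>)}"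
  define w where "w = (\<lambda>V::'a set. ennreal (unit_ball_vol s * (diameter V / 2) powr s))"
  define VA where "VA = (\<lambda>k. if U k \<inter> A \<noteq> {} then U k else {})"
  define VB where "VB = (\<lambda>k. if U k \<inter> B \<noteq> {} then U k else {})"
  have covA: "A \<subseteq> (\<Union>k. VA k)"
  proof
    fix x assume "x \<in> A"
    then obtain k where "x \<in> U k" using U by blast
    then show "x \<in> (\<Union>k. VA k)" using \<open>x \<in> A\<close> unfolding VA_def by (intro UN_I[of k]) auto
  qed
  have covB: "B \<subseteq> (\<Union>k. VB k)"
  proof
    fix x assume "x \<in> B"
    then obtain k where "x \<in> U k" using U by blast
    then show "x \<in> (\<Union>k. VB k)" using \<open>x \<in> B\<close> unfolding VB_def by (intro UN_I[of k]) auto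
  qed
  have w0: "w {} = 0" unfolding w_def by simp
  have "hausdorff_premeasure s \<delta> A \<le> (\<Sum>k. w (VA k))"
    unfolding hausdorff_premeasure_def w_def
    by (rule INF_lower) (use U d0 covA in \<open>auto simp: VA_def\<close>)
  moreover have "hausdorff_premeasure s \<delta> B \<le> (\<Sum>k. w (VB k))"
    unfolding hausdorff_premeasure_def w_def
    by (rule INF_lower) (use U d0 covB in \<open>auto simp: VB_def\<close>)
  moreover have "(\<Sum>k. w (VA k)) + (\<Sum>k. w (VB k)) = (\<Sum>k. w (VA k) + w (VB k))"
    by (rule suminf_add) auto
  moreover have "(\<Sum>k. w (VA k) + w (VB k)) \<le> (\<Sum>k. w (U k))"
  proof (rule suminf_le)
    fix k
    have "\<not> (U k \<inter> A \<noteq> {} \<and> U k \<inter> B \<noteq> {})"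
    proof
      assume "U k \<inter> A \<noteq> {} \<and> U k \<inter> B \<noteq> {}"
      then obtain x y where "x \<in> U k" "x \<in> A" "y \<in> U k" "y \<in> B" by blast
      then have "dist x y \<le> diameter (U k)" using U diameter_bounded_bound by blast
      moreover have "dist x y \<ge> 1" using sep \<open>x \<in> A\<close> \<open>y \<in> B\<close> by blast
      moreover have "diameter (U k) \<le> \<delta>" using U by blast
      ultimately show False using d by linarith
    qed
    then show "w (VA k) + w (VB k) \<le> w (U k)" unfolding VA_def VB_def using w0 by auto
  qed auto
  ultimately show "hausdorff_premeasure s \<delta> A + hausdorff_premeasure s \<delta> B
        \<le> (\<Sum>i. ennreal (unit_ball_vol s * (diameter (U i) / 2) powr s))"
    unfolding w_def by (metis (no_types, lifting) add_mono order_trans)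
qed

lemma h_split:
  fixes A B :: "'a::metric_space set"
  assumes sep: "\<And>x y. x \<in> A \<Longrightarrow> y \<in> B \<Longrightarrow> dist x y \<ge> 1"
  shows "hausdorff_measure s A + hausdorff_measure s B \<le> hausdorff_measure s (A \<union> B)"
proof -
  have "hausdorff_premeasure s d1 A + hausdorff_premeasure s d2 B \<le> hausdorff_measure s (A \<union> B)"
    if "d1 > 0" "d2 > 0" for d1 d2
  proof -
    define \<delta> where "\<delta> = min (min d1 d2) (1/2)"
    have "\<delta> > 0" "\<delta> < 1" "\<delta> \<le> d1" "\<delta> \<le> d2" using that by (auto simp: \<delta>_def)
    have "hausdorff_premeasure s d1 A + hausdorff_premeasure s d2 B \<le>
          hausdorff_premeasure s \<delta> A + hausdorff_premeasure s \<delta> B"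
      by (intro add_mono hpre_anti) fact+
    also have "\<dots> \<le> hausdorff_premeasure s \<delta> (A \<union> B)" by (rule hpre_split[OF sep \<open>\<delta> < 1\<close>]) (use \<open>\<delta> > 0\<close> in auto)
    also have "\<dots> \<le> hausdorff_measure s (A \<union> B)"
      unfolding hausdorff_measure_def by (rule SUP_upper) (use \<open>\<delta> > 0\<close> in auto)
    finally show ?thesis .
  qed
  moreover have ne: "({0<..}::real set) \<noteq> {}" by auto
  ultimately show ?thesis
    unfolding hausdorff_measure_def
    apply (subst ennreal_SUP_add_left[symmetric, OF ne])
    apply (rule SUP_least)
    apply (subst ennreal_SUP_add_right[OF ne])
    apply (rule SUP_least)
    apply (simp add: hausdorff_measure_def)
    done
qed

lemma h_finite_split:
  fixes A :: "'i \<Rightarrow> 'a::metric_space set"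
  assumes "finite I"
    and "\<And>i j x y. i \<in> I \<Longrightarrow> j \<in> I \<Longrightarrow> i \<noteq> j \<Longrightarrow> x \<in> A i \<Longrightarrow> y \<in> A j \<Longrightarrow> dist x y \<ge> 1"
  shows "(\<Sum>i\<in>I. hausdorff_measure s (A i)) \<le> hausdorff_measure s (\<Union>i\<in>I. A i)"
  using assms
proof (induction I rule: finite_induct)
  case empty
  then show ?case by simp
next
  case (insert j I)
  have "(\<Sum>i\<in>insert j I. hausdorff_measure s (A i)) = hausdorff_measure s (A j) + (\<Sum>i\<in>I. hausdorff_measure s (A i))"
    using insert by simp
  also have "\<dots> \<le> hausdorff_measure s (A j) + hausdorff_measure s (\<Union>i\<in>I. A i)"
    using insert by (intro add_left_mono) (metis insertCI)
  also have "\<dots> \<le> hausdorff_measure s (A j \<union> (\<Union>i\<in>I. A i))"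
    by (rule h_split) (use insert in \<open>auto intro: insert.prems\<close>)
  finally show ?case by simp
qed



lemma sep_subset:
  fixes S :: "'a::metric_space set"
  assumes "finite S" and R0: "R > 0"
  shows "\<exists>S'\<subseteq>S. (\<forall>p\<in>S'. \<forall>q\<in>S'. p \<noteq> q \<longrightarrow> dist p q \<ge> R) \<and> (\<forall>p\<in>S. \<exists>q\<in>S'. dist p q < R)"
  using assms
proof (induction S rule: finite_induct)
  case empty
  then show ?case by auto
next
  case (insert x S)
  then obtain S' where S': "S' \<subseteq> S" "\<forall>p\<in>S'. \<forall>q\<in>S'. p \<noteq> q \<longrightarrow> dist p q \<ge> R"
     "\<forall>p\<in>S. \<exists>q\<in>S'. dist p q < R" by blast
  show ?case
  proof (cases "\<exists>q\<in>S'. dist x q < R")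
    case True
    then show ?thesis using S' by (intro exI[of _ S']) auto
  next
    case False
    show ?thesis
      apply (intro exI[of _ "insert x S'"])
      using S' False R0
      by (auto simp: dist_commute)
  qed
qed

lemma lattice_count:
  fixes M :: "real ^ 'n ^ 'n"
  assumes "invertible M"
  shows "\<exists>N::nat. \<forall>c. finite (lattice M \<inter> ball c R) \<and> card (lattice M \<inter> ball c R) \<le> N"
proof -
  obtain Mi where Mi: "M ** Mi = mat 1" "Mi ** M = mat 1" using assms unfolding invertible_def by blast
  obtain K where K: "K > 0" "\<And>x. norm (Mi *v x) \<le> norm x * K"
    using bounded_linear.pos_bounded[OF matrix_vector_mul_bounded_linear[of Mi]] by blast
  define m where "m = nat \<lfloor>2 * K * R\<rfloor>"
  define T where "T = PiE (UNIV :: 'n set) (\<lambda>_. {0..m})"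
  have fT: "finite T" unfolding T_def by (intro finite_PiE) auto
  have cT: "card T = (m + 1) ^ CARD('n)" unfolding T_def by (simp add: card_PiE)
  have "finite (lattice M \<inter> ball c R) \<and> card (lattice M \<inter> ball c R) \<le> (m + 1) ^ CARD('n)" for c
  proof -
    define a where "a = (\<lambda>i. (Mi *v c) $ i - K * R)"
    define g where "g = (\<lambda>p. \<lambda>i. nat \<lfloor>(Mi *v p) $ i - a i\<rfloor>)"
    have key: "\<And>p. p \<in> lattice M \<Longrightarrow> (\<forall>i. (Mi *v p) $ i \<in> \<int>)"
    proof -
      fix p assume "p \<in> lattice M"
      then obtain k where k: "p = M *v k" "\<forall>i. k $ i \<in> \<int>" unfolding lattice_def by blast
      have "Mi *v p = k" using k Mi by (simp add: matrix_vector_mul_assoc)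
      then show "\<forall>i. (Mi *v p) $ i \<in> \<int>" using k by simp
    qed
    have bnd: "\<bar>(Mi *v p) $ i - (Mi *v c) $ i\<bar> < K * R" if "p \<in> ball c R" for p i
    proof -
      have "\<bar>(Mi *v p) $ i - (Mi *v c) $ i\<bar> = \<bar>(Mi *v (p - c)) $ i\<bar>"
        by (simp add: matrix_vector_mult_diff_distrib)
      also have "\<dots> \<le> norm (Mi *v (p - c))" by (rule component_le_norm_cart)
      also have "\<dots> \<le> norm (p - c) * K" by (rule K(2))
      also have "\<dots> < R * K" using that K(1) by (simp add: dist_norm norm_minus_commute)
      finally show ?thesis by (simp add: mult.commute)
    qed
    have inj: "inj_on g (lattice M \<inter> ball c R)"
    proof (rule inj_onI)
      fix p q assume p: "p \<in> lattice M \<inter> ball c R" and q: "q \<in> lattice M \<inter> ball c R" and e: "g p = g q"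
      have "Mi *v p = Mi *v q"
      proof (rule vec_eq_iff[THEN iffD2], rule allI)
        fix i
        obtain u where u: "(Mi *v p) $ i = of_int u" using key p by (meson IntD1 Ints_cases)
        obtain v where v: "(Mi *v q) $ i = of_int v" using key q by (meson IntD1 Ints_cases)
        have bp: "\<bar>(Mi *v p) $ i - (Mi *v c) $ i\<bar> < K * R" using bnd p by blast
        have bq: "\<bar>(Mi *v q) $ i - (Mi *v c) $ i\<bar> < K * R" using bnd q by blast
        have f1: "\<lfloor>(Mi *v p) $ i - a i\<rfloor> \<ge> 0" using bp unfolding a_def by auto
        have f2: "\<lfloor>(Mi *v q) $ i - a i\<rfloor> \<ge> 0" using bq unfolding a_def by auto
        have "nat \<lfloor>(Mi *v p) $ i - a i\<rfloor> = nat \<lfloor>(Mi *v q) $ i - a i\<rfloor>"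
          using e unfolding g_def by meson
        then have "\<lfloor>(Mi *v p) $ i - a i\<rfloor> = \<lfloor>(Mi *v q) $ i - a i\<rfloor>" using f1 f2 by (metis nat_0_le)
        then have "\<lfloor>- a i + of_int u\<rfloor> = \<lfloor>- a i + of_int v\<rfloor>" using u v by (simp add: add.commute)
        moreover have "\<lfloor>- a i + of_int u\<rfloor> = \<lfloor>- a i\<rfloor> + u" by (rule floor_add_int[symmetric])
        moreover have "\<lfloor>- a i + of_int v\<rfloor> = \<lfloor>- a i\<rfloor> + v" by (rule floor_add_int[symmetric])
        ultimately have "u = v" by linarith
        then show "(Mi *v p) $ i = (Mi *v q) $ i" using u v by simp
      qed
      then have "M *v (Mi *v p) = M *v (Mi *v q)" by simp
      then show "p = q" using Mi by (simp add: matrix_vector_mul_assoc)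
    qed
    have img: "g ` (lattice M \<inter> ball c R) \<subseteq> T"
    proof
      fix y assume "y \<in> g ` (lattice M \<inter> ball c R)"
      then obtain p where p: "p \<in> ball c R" and y: "y = g p" by blast
      have "y i \<in> {0..m}" for i
      proof -
        have bp: "\<bar>(Mi *v p) $ i - (Mi *v c) $ i\<bar> < K * R" using bnd p by blast
        have "\<lfloor>(Mi *v p) $ i - a i\<rfloor> \<le> \<lfloor>2 * K * R\<rfloor>"
          using bp unfolding a_def by (intro floor_mono) auto
        then show ?thesis unfolding y g_def m_def by (simp add: nat_mono)
      qed
      then show "y \<in> T" unfolding T_def by auto
    qed
    have fin: "finite (lattice M \<inter> ball c R)"
      using inj img fT finite_imageD finite_subset by blast
    have "card (lattice M \<inter> ball c R) = card (g ` (lattice M \<inter> ball c R))"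
      using inj by (simp add: card_image)
    also have "\<dots> \<le> card T" using img fT by (rule card_mono[rotated])
    finally show ?thesis using fin cT by simp
  qed
  then show ?thesis by blast
qed


lemma rhs_eq: "(C::real) > 0 \<Longrightarrow> (\<kappa>::real) > 0 \<Longrightarrow> L > 0 \<Longrightarrow> ennreal C * ennreal L / ennreal \<kappa> * (1 + ennreal 2 / ennreal L) = ennreal (C * L / \<kappa> * (1 + 2 / L))"
proof -
  assume a: "C > 0" "\<kappa> > 0" "L > 0"
  have 1: "ennreal 2 / ennreal L = ennreal (2 / L)" using a by (intro divide_ennreal) auto
  have 2: "1 + ennreal (2 / L) = ennreal (1 + 2 / L)" using a by (simp add: ennreal_plus)
  have 3: "ennreal C * ennreal L = ennreal (C * L)" using a by (simp add: ennreal_mult)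
  have 4: "ennreal (C * L) / ennreal \<kappa> = ennreal (C * L / \<kappa>)" using a by (intro divide_ennreal) auto
  have 5: "ennreal (C * L / \<kappa>) * ennreal (1 + 2 / L) = ennreal (C * L / \<kappa> * (1 + 2 / L))"
    by (rule ennreal_mult[symmetric]) (use a in auto)
  show ?thesis unfolding 1 2 3 4 5 ..
qed


theorem proposition2p4:
  fixes M :: "real ^ 'n ^ 'n" and d :: nat and r :: real
  assumes "d \<ge> 1" and "CARD('n) = 2 * d"
    and "invertible M" and "r > 0"
  shows "\<exists>C D :: real. \<forall>(\<Omega> :: (real ^ 'n) set) \<kappa>.
           compact \<Omega> \<and> max_ahlfors_regular_boundary \<Omega> \<kappa> \<and> bdry_measure \<Omega> > 0 \<longrightarrow>
           ennreal (real (card (bdry_lattice_points M r \<Omega>)))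
             \<le> ennreal C * bdry_measure \<Omega> / ennreal \<kappa> * (1 + ennreal D / bdry_measure \<Omega>)"
proof -
  define e where "e = CARD('n) - 1"
  have e1: "e \<ge> 1" using assms(1,2) unfolding e_def by simp
  have se: "real CARD('n) - 1 = real e" using e1 unfolding e_def by (simp add: of_nat_diff)
  obtain N where N: "\<And>c. finite (lattice M \<inter> ball c (2 * r + 3)) \<and> card (lattice M \<inter> ball c (2 * r + 3)) \<le> N"
    using lattice_count[OF assms(3), of "2 * r + 3"] by blast
  define C where "C = real N + 1"
  have C0: "C > 0" unfolding C_def by simp
  show ?thesis
  proof (rule exI[of _ C], rule exI[of _ "2::real"], intro allI impI, elim conjE)
    fix \<Omega> :: "(real ^ 'n) set" and \<kappa> :: real
    assume cpt: "compact \<Omega>" and AR: "max_ahlfors_regular_boundary \<Omega> \<kappa>" and Lpos: "bdry_measure \<Omega> > 0"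
    define L where "L = bdry_measure \<Omega>"
    define F where "F = frontier \<Omega>"
    define S where "S = bdry_lattice_points M r \<Omega>"
    have k0: "\<kappa> > 0" using AR unfolding max_ahlfors_regular_boundary_def by blast
    have ARz: "\<And>z \<rho>. z \<in> F \<Longrightarrow> 0 < \<rho> \<Longrightarrow> ennreal (\<rho> ^ e) < L \<Longrightarrow>
        hausdorff_measure (real e) (F \<inter> ball z \<rho>) \<ge> ennreal (\<kappa> * \<rho> ^ e)"
      using AR unfolding max_ahlfors_regular_boundary_def L_def F_def e_def[symmetric] se by blast
    have LF: "L = hausdorff_measure (real e) F" unfolding L_def bdry_measure_def F_def se ..
    have goal: "ennreal (real (card S)) \<le> ennreal C * L / ennreal \<kappa> * (1 + ennreal 2 / L)"
    proof (cases "finite S")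
      case False
      then show ?thesis by simp
    next
      case finS: True
      show ?thesis
      proof (cases "L = top")
        case True
        then show ?thesis using C0 k0 by (simp add: ennreal_mult_top ennreal_top_mult ennreal_top_divide)
      next
        case False
        then obtain Lr where Lr: "L = ennreal Lr" "Lr \<ge> 0" by (cases L) auto
        have Lr0: "Lr > 0" using Lpos Lr L_def by (metis ennreal_eq_0_iff not_gr_zero not_le)
        define \<rho> where "\<rho> = (if Lr \<ge> 2 then 1 else root e (Lr / 2))"
        have \<rho>0: "\<rho> > 0" using Lr0 e1 unfolding \<rho>_def by auto
        have \<rho>1: "\<rho> \<le> 1" using Lr0 e1 unfolding \<rho>_def by auto
        have \<rho>e: "\<rho> ^ e < Lr" and \<rho>e2: "Lr \<le> (Lr + 2) * \<rho> ^ e"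
        proof -
          have "\<rho> ^ e < Lr \<and> Lr \<le> (Lr + 2) * \<rho> ^ e"
          proof (cases "Lr \<ge> 2")
            case True
            then show ?thesis unfolding \<rho>_def by simp
          next
            case False
            then have "\<rho> ^ e = Lr / 2" unfolding \<rho>_def using e1 Lr0 by (simp add: real_root_pow_pos2)
            then show ?thesis using Lr0 by (simp add: field_simps)
          qed
          then show "\<rho> ^ e < Lr" "Lr \<le> (Lr + 2) * \<rho> ^ e" by auto
        qed
        have "\<forall>p\<in>S. \<exists>z. z \<in> F \<and> dist p z < r"
        proof
          fix p assume "p \<in> S"
          then have "p \<in> F + ball 0 r" unfolding S_def bdry_lattice_points_def F_def by blast
          then obtain a b where "a \<in> F" "b \<in> ball 0 r" "p = a + b" by (auto elim: set_plus_elim)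
          then show "\<exists>z. z \<in> F \<and> dist p z < r" by (intro exI[of _ a]) (auto simp: dist_norm)
        qed
        then obtain zf where zf: "\<And>p. p \<in> S \<Longrightarrow> zf p \<in> F \<and> dist p (zf p) < r" by metis
        define R where "R = 2 * r + 2 * \<rho> + 1"
        have R0: "R > 0" using assms(4) \<rho>0 unfolding R_def by simp
        obtain S' where S': "S' \<subseteq> S" "\<And>p q. p \<in> S' \<Longrightarrow> q \<in> S' \<Longrightarrow> p \<noteq> q \<Longrightarrow> dist p q \<ge> R"
          "\<And>p. p \<in> S \<Longrightarrow> \<exists>q\<in>S'. dist p q < R"
          using sep_subset[OF finS R0] by blast
        have finS': "finite S'" using S'(1) finS finite_subset by blast
        have SL: "S \<subseteq> lattice M" unfolding S_def bdry_lattice_points_def by blast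
        have fin_ball: "finite (lattice M \<inter> ball q R) \<and> card (lattice M \<inter> ball q R) \<le> N" for q
        proof -
          have sub: "lattice M \<inter> ball q R \<subseteq> lattice M \<inter> ball q (2 * r + 3)"
            using \<rho>1 unfolding R_def by auto
          then show ?thesis using N[of q] by (meson card_mono finite_subset order_trans)
        qed
        have cardS: "card S \<le> card S' * N"
        proof -
          have "S \<subseteq> (\<Union>q\<in>S'. lattice M \<inter> ball q R)"
          proof
            fix p assume "p \<in> S"
            then obtain q where "q \<in> S'" "dist p q < R" using S'(3) by blast
            then show "p \<in> (\<Union>q\<in>S'. lattice M \<inter> ball q R)" using SL \<open>p \<in> S\<close>
              by (auto simp: dist_commute)
          qed
          then have "card S \<le> card (\<Union>q\<in>S'. lattice M \<inter> ball q R)"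
            by (rule card_mono[rotated]) (use finS' fin_ball in \<open>intro finite_UN_I; blast\<close>)
          also have "\<dots> \<le> (\<Sum>q\<in>S'. card (lattice M \<inter> ball q R))" by (rule card_UN_le[OF finS'])
          also have "\<dots> \<le> (\<Sum>q\<in>S'. N)" by (rule sum_mono) (use fin_ball in auto)
          finally show ?thesis by simp
        qed
        define A where "A = (\<lambda>q. F \<inter> ball (zf q) \<rho>)"
        have sep: "dist x y \<ge> 1" if "q \<in> S'" "q' \<in> S'" "q \<noteq> q'" "x \<in> A q" "y \<in> A q'" for q q' x y
        proof -
          have "dist q q' \<ge> R" using S'(2) that by blast
          moreover have "dist q (zf q) < r" "dist q' (zf q') < r" using zf S'(1) that by auto
          moreover have "dist (zf q) x < \<rho>" "dist (zf q') y < \<rho>" using that unfolding A_def by auto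
          ultimately show ?thesis unfolding R_def by metric
        qed
        have "(\<Sum>q\<in>S'. ennreal (\<kappa> * \<rho> ^ e)) \<le> (\<Sum>q\<in>S'. hausdorff_measure (real e) (A q))"
        proof (rule sum_mono)
          fix q assume "q \<in> S'"
          then have "zf q \<in> F" using zf S'(1) by auto
          moreover have "ennreal (\<rho> ^ e) < L" using \<rho>e Lr \<rho>0 by (simp add: ennreal_less_iff)
          ultimately show "ennreal (\<kappa> * \<rho> ^ e) \<le> hausdorff_measure (real e) (A q)"
            unfolding A_def using ARz \<rho>0 by blast
        qed
        also have "\<dots> \<le> hausdorff_measure (real e) (\<Union>q\<in>S'. A q)"
          by (rule h_finite_split[OF finS']) (use sep in blast)
        also have "\<dots> \<le> hausdorff_measure (real e) F"
          by (rule h_mono_set) (auto simp: A_def)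
        also have "\<dots> = ennreal Lr" using LF Lr by simp
        finally have "ennreal (real (card S') * (\<kappa> * \<rho> ^ e)) \<le> ennreal Lr"
          using k0 \<rho>0 by (simp add: ennreal_of_nat_eq_real_of_nat ennreal_mult)
        then have main: "real (card S') * (\<kappa> * \<rho> ^ e) \<le> Lr"
          using Lr0 by (simp add: ennreal_le_iff)
        have "real (card S') * \<kappa> * \<rho> ^ e \<le> (Lr + 2) * \<rho> ^ e"
          using main \<rho>e2 by (simp add: mult.assoc)
        then have "real (card S') * \<kappa> \<le> Lr + 2"
          using \<rho>0 by (meson mult_le_cancel_right_pos zero_less_power)
        then have "real (card S) * \<kappa> \<le> real N * (Lr + 2)"
        proof -
          assume h: "real (card S') * \<kappa> \<le> Lr + 2"
          have "real (card S) * \<kappa> \<le> real (card S' * N) * \<kappa>"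
            using cardS k0 by (intro mult_right_mono) (simp_all add: of_nat_mult[symmetric] del: of_nat_mult)
          also have "\<dots> = real N * (real (card S') * \<kappa>)" by simp
          also have "\<dots> \<le> real N * (Lr + 2)" using h by (intro mult_left_mono) auto
          finally show ?thesis .
        qed
        also have "\<dots> \<le> C * (Lr + 2)" unfolding C_def using Lr0 by (intro mult_right_mono) auto
        finally have h: "real (card S) * \<kappa> \<le> C * (Lr + 2)" .
        have eq: "C * Lr / \<kappa> * (1 + 2 / Lr) = C * (Lr + 2) / \<kappa>" using Lr0 k0 by (simp add: field_simps)
        have "real (card S) \<le> C * Lr / \<kappa> * (1 + 2 / Lr)"
          unfolding eq using h k0 by (simp add: pos_le_divide_eq)
        then show ?thesis unfolding Lr(1) using rhs_eq[OF C0 k0 Lr0] by (simp add: ennreal_leI)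
      qed
    qed
    show "ennreal (real (card (bdry_lattice_points M r \<Omega>)))
             \<le> ennreal C * bdry_measure \<Omega> / ennreal \<kappa> * (1 + ennreal 2 / bdry_measure \<Omega>)"
      using goal unfolding S_def L_def by simp
  qed
qed
end
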